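(* Let $\varrho,\sigma$ be density operators on a finite-dimensional Hilbert space and $\alpha\in(0,1)$. Suppose $D_\alpha^{\mathrm{test}}(\varrho\|\sigma)=D_\alpha^{\mathrm{meas}}(\varrho\|\sigma)$. Then for every orthogonal projection $P$ attaining $\max_{P\text{ projection}}D_\alpha(\mathcal P(\varrho)\|\mathcal P(\sigma))$, with $P^\perp:=I-P$, \[ (\operatorname{Tr}\sigma P)P\varrho P=(\operatorname{Tr}\varrho P)P\sigma P,\qquad (\operatorname{Tr}\sigma P^\perp)P^\perp\varrho P^\perp=(\operatorname{Tr}\varrho P^\perp)P^\perp\sigma P^\perp. \] If moreover $\varrho\ne\sigma$, then $\varrho^0\le\sigma^0$ implies $P\sigma P\ne0$ and $P^\perp\sigma P^\perp\neq0$, and $\varrho^0\ge\sigma^0$ implies $P\varrho P\ne0$ and $P^\perp\varrho P^\perp\ne0$.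
   Context: $A^0$ denotes the support projection of a PSD operator $A$. For probability vectors $p,q$ and $\alpha\in(0,1)$, $D_\alpha(p\|q)=\frac{1}{\alpha-1}\log\sum_xp(x)^\alpha q(x)^{1-\alpha}$. For an operator $0\le T\le I$, $\mathcal T(X):=(\operatorname{Tr}XT,\operatorname{Tr}X(I-T))$ (written $\mathcal P$ when $T=P$ is a projection). $D_\alpha^{\mathrm{test}}(\varrho\|\sigma):=\max_{0\le T\le I}D_\alpha(\mathcal T(\varrho)\|\mathcal T(\sigma))$, which equals the maximum of $D_\alpha(\mathcal P(\varrho)\|\mathcal P(\sigma))$ over projections $P$. For a finite-outcome POVM $M$, $\mathcal M(\varrho):=(\operatorname{Tr}M_x\varrho)_x$, and $D_\alpha^{\mathrm{meas}}(\varrho\|\sigma):=\sup_MD_\alpha(\mathcal M(\varrho)\|\mathcal M(\sigma))$. *)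

theory Defs
  imports "HOL-Analysis.Analysis"
begin

definition adjoint :: "complex^'n^'n \<Rightarrow> complex^'n^'n" where
  "adjoint A = (\<chi> i j. cnj (A $ j $ i))"

definition mscale :: "complex \<Rightarrow> complex^'n^'n \<Rightarrow> complex^'n^'n" where
  "mscale c A = (\<chi> i j. c * A $ i $ j)"

definition qform :: "complex^'n^'n \<Rightarrow> complex^'n \<Rightarrow> complex" where
  "qform A x = (\<Sum>i\<in>UNIV. cnj (x $ i) * (A *v x) $ i)"

definition psd :: "complex^'n^'n \<Rightarrow> bool" where
  "psd A \<longleftrightarrow> adjoint A = A \<and> (\<forall>x. Im (qform A x) = 0 \<and> Re (qform A x) \<ge> 0)"

definition loewner_le :: "complex^'n^'n \<Rightarrow> complex^'n^'n \<Rightarrow> bool" where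
  "loewner_le A B \<longleftrightarrow> psd (B - A)"

definition density :: "complex^'n^'n \<Rightarrow> bool" where
  "density \<rho> \<longleftrightarrow> psd \<rho> \<and> trace \<rho> = 1"

definition is_proj :: "complex^'n^'n \<Rightarrow> bool" where
  "is_proj P \<longleftrightarrow> P ** P = P \<and> adjoint P = P"

definition supp_proj :: "complex^'n^'n \<Rightarrow> complex^'n^'n" where
  "supp_proj A = (THE P. is_proj P \<and> range (\<lambda>x. P *v x) = range (\<lambda>x. A *v x))"

text \<open>Renyi divergence of (probability) vectors p, q on a finite set X, for 0<alpha<1.
  Value +infinity when the sum vanishes (log 0 = -infinity).\<close>
definition renyi :: "real \<Rightarrow> 'x set \<Rightarrow> ('x \<Rightarrow> real) \<Rightarrow> ('x \<Rightarrow> real) \<Rightarrow> ereal" where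
  "renyi \<alpha> X p q = (let s = (\<Sum>x\<in>X. p x powr \<alpha> * q x powr (1 - \<alpha>))
     in if s = 0 then \<infinity> else ereal (ln s / (\<alpha> - 1)))"

definition test_map :: "complex^'n^'n \<Rightarrow> complex^'n^'n \<Rightarrow> bool \<Rightarrow> real" where
  "test_map T X = (\<lambda>b. if b then Re (trace (X ** T)) else Re (trace (X ** (mat 1 - T))))"

definition D_test :: "real \<Rightarrow> complex^'n^'n \<Rightarrow> complex^'n^'n \<Rightarrow> ereal" where
  "D_test \<alpha> \<rho> \<sigma> = (SUP T \<in> {T. psd T \<and> loewner_le T (mat 1)}.
      renyi \<alpha> UNIV (test_map T \<rho>) (test_map T \<sigma>))"

definition povm :: "nat \<Rightarrow> (nat \<Rightarrow> complex^'n^'n) \<Rightarrow> bool" where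
  "povm m M \<longleftrightarrow> (\<forall>i<m. psd (M i)) \<and> (\<Sum>i<m. M i) = mat 1"

definition D_meas :: "real \<Rightarrow> complex^'n^'n \<Rightarrow> complex^'n^'n \<Rightarrow> ereal" where
  "D_meas \<alpha> \<rho> \<sigma> = (SUP mM \<in> {(m, M). povm m M}.
      renyi \<alpha> {..<fst mM} (\<lambda>i. Re (trace (snd mM i ** \<rho>))) (\<lambda>i. Re (trace (snd mM i ** \<sigma>))))"

end

theory Submission
  imports Defs
begin


definition cinner :: "complex^'n \<Rightarrow> complex^'n \<Rightarrow> complex" where
  "cinner x y = (\<Sum>i\<in>UNIV. cnj (x$i) * y$i)"

lemma qform_cinner: "qform A x = cinner x (A *v x)"
  by (simp add: qform_def cinner_def)

lemma cinner_add_right: "cinner x (y + z) = cinner x y + cinner x z"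
  by (simp add: cinner_def distrib_left sum.distrib)
lemma cinner_add_left: "cinner (x + y) z = cinner x z + cinner y z"
  by (simp add: cinner_def distrib_right sum.distrib)
lemma cinner_diff_right: "cinner x (y - z) = cinner x y - cinner x z"
  by (simp add: cinner_def right_diff_distrib sum_subtractf)
lemma cinner_diff_left: "cinner (x - y) z = cinner x z - cinner y z"
  by (simp add: cinner_def left_diff_distrib sum_subtractf)
lemma cinner_scale_right: "cinner x (c *s y) = c * cinner x y"
  by (simp add: cinner_def sum_distrib_left algebra_simps)
lemma cinner_scale_left: "cinner (c *s x) y = cnj c * cinner x y"
  by (simp add: cinner_def sum_distrib_left algebra_simps)
lemma cinner_zero_right[simp]: "cinner x 0 = 0"
  by (simp add: cinner_def)
lemma cinner_zero_left[simp]: "cinner 0 x = 0"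
  by (simp add: cinner_def)
lemma cinner_cnj: "cnj (cinner x y) = cinner y x"
  by (simp add: cinner_def mult.commute)

lemma cinner_self: "cinner x x = complex_of_real ((norm x)^2)"
proof -
  have "cinner x x = (\<Sum>i\<in>UNIV. complex_of_real ((norm (x$i))^2))"
    unfolding cinner_def by (intro sum.cong refl) (simp add: complex_norm_square mult.commute flip: of_real_power)
  also have "\<dots> = complex_of_real (\<Sum>i\<in>UNIV. (norm (x$i))^2)" by simp
  also have "(\<Sum>i\<in>UNIV. (norm (x$i))^2) = (norm x)^2"
    by (simp add: norm_vec_def L2_set_def sum_nonneg)
  finally show ?thesis .
qed

lemma cinner_self_eq_0: "cinner x x = 0 \<longleftrightarrow> x = 0"
  by (simp add: cinner_self)

lemma cinner_ext: assumes "\<And>x. cinner x u = cinner x v" shows "u = v"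
proof -
  have "cinner (u - v) (u - v) = 0" using assms[of "u-v"] by (simp add: cinner_diff_right)
  thus ?thesis by (simp add: cinner_self_eq_0)
qed

lemma mv_add: "A *v (x + y) = A *v x + A *v (y::complex^'n)"
  by (simp add: matrix_vector_right_distrib)
lemma mv_diff: "A *v (x - y) = A *v x - A *v (y::complex^'n)"
  by (simp add: vec_eq_iff matrix_vector_mult_def sum_subtractf right_diff_distrib)
lemma mv_scale: "A *v (c *s x) = c *s (A *v (x::complex^'n))"
  by (simp add: vec_eq_iff matrix_vector_mult_def sum_distrib_left algebra_simps)
lemma mv_madd: "(A + B) *v x = A *v x + B *v (x::complex^'n)"
  by (simp add: vec_eq_iff matrix_vector_mult_def sum.distrib algebra_simps)
lemma mv_mdiff: "(A - B) *v x = A *v x - B *v (x::complex^'n)"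
  by (simp add: vec_eq_iff matrix_vector_mult_def sum_subtractf algebra_simps)

lemma adjoint_adjoint[simp]: "adjoint (adjoint A) = A"
  by (simp add: adjoint_def vec_eq_iff)
lemma adjoint_mult: "adjoint (A ** B) = adjoint B ** adjoint (A::complex^'n^'n)"
  by (simp add: adjoint_def vec_eq_iff matrix_matrix_mult_def mult.commute)
lemma adjoint_diff: "adjoint (A - B) = adjoint A - adjoint B"
  by (simp add: adjoint_def vec_eq_iff)
lemma adjoint_add: "adjoint (A + B) = adjoint A + adjoint B"
  by (simp add: adjoint_def vec_eq_iff)
lemma adjoint_mat1[simp]: "adjoint (mat 1 :: complex^'n^'n) = mat 1"
  by (simp add: adjoint_def vec_eq_iff mat_def)
lemma adjoint_zero[simp]: "adjoint (0 :: complex^'n^'n) = 0"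
  by (simp add: adjoint_def vec_eq_iff)

lemma cinner_adjoint: "cinner x (A *v y) = cinner (adjoint A *v x) y"
proof -
  have "cinner x (A *v y) = (\<Sum>i\<in>UNIV. \<Sum>j\<in>UNIV. cnj (x$i) * A$i$j * y$j)"
    by (simp add: cinner_def matrix_vector_mult_def sum_distrib_left mult.assoc)
  also have "\<dots> = (\<Sum>j\<in>UNIV. \<Sum>i\<in>UNIV. cnj (x$i) * A$i$j * y$j)" by (rule sum.swap)
  also have "\<dots> = cinner (adjoint A *v x) y"
    by (simp add: cinner_def matrix_vector_mult_def adjoint_def sum_distrib_left sum_distrib_right mult.commute mult.left_commute)
  finally show ?thesis .
qed

lemma cinner_herm: "adjoint A = A \<Longrightarrow> cinner x (A *v y) = cinner (A *v x) y"
  by (metis cinner_adjoint)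

lemma mat_eq_mv: "(\<And>x. A *v x = B *v (x::complex^'n)) \<Longrightarrow> A = B"
  by (simp add: matrix_eq)

lemma qform_herm_real: "adjoint A = A \<Longrightarrow> Im (qform A x) = 0"
proof -
  assume h: "adjoint A = A"
  have "cnj (qform A x) = qform A x"
    by (simp add: qform_cinner cinner_cnj) (metis h cinner_herm)
  thus ?thesis by (metis Reals_cnj_iff complex_is_Real_iff)
qed



lemma qform_add: "qform A (x + y) = qform A x + qform A y + cinner x (A *v y) + cinner y (A *v x)"
  by (simp add: qform_cinner mv_add cinner_add_left cinner_add_right)

lemma qform_scale: "qform A (c *s x) = cnj c * c * qform A x"
  by (simp add: qform_cinner mv_scale cinner_scale_left cinner_scale_right)

lemma qform_mdiff: "qform (A - B) x = qform A x - qform B x"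
  by (simp add: qform_cinner mv_mdiff cinner_diff_right)

lemma polarization:
  assumes "\<And>x. qform A x = 0" shows "A = 0"
proof (rule mat_eq_mv)
  fix y
  have "cinner x (A *v y) = 0" for x
  proof -
    have s1: "cinner x (A *v y) + cinner y (A *v x) = 0"
      using qform_add[of A x y] assms by simp
    have s2: "cinner x (A *v (\<i> *s y)) + cinner (\<i> *s y) (A *v x) = 0"
      using qform_add[of A x "\<i> *s y"] assms by simp
    hence "\<i> * cinner x (A *v y) - \<i> * cinner y (A *v x) = 0"
      by (simp add: mv_scale cinner_scale_left cinner_scale_right)
    hence "cinner x (A *v y) - cinner y (A *v x) = 0"
      by (metis complex_i_not_zero mult_eq_0_iff right_diff_distrib)
    moreover have "2 * cinner x (A *v y) = (cinner x (A *v y) + cinner y (A *v x)) + (cinner x (A *v y) - cinner y (A *v x))" by simp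
    ultimately show ?thesis using s1 by simp
  qed
  thus "A *v y = 0 *v y" by (metis cinner_ext cinner_zero_right matrix_vector_mult_0)
qed

lemma real_quad_zero:
  fixes c d :: real
  assumes "\<And>t. 0 \<le> t * c + t^2 * d" shows "c = 0"
proof (rule ccontr)
  assume c: "c \<noteq> 0"
  define k where "k = \<bar>d\<bar> + 1"
  have pos: "k > 0" "d - k < 0" by (auto simp: k_def)
  have eq: "(- c / k) * c + (- c / k)^2 * d = c^2 * (d - k) / k^2"
    using pos by (simp add: field_simps power2_eq_square)
  have "c^2 > 0" using c by simp
  hence "c^2 * (d - k) / k^2 < 0" using pos by (simp add: divide_neg_pos mult_pos_neg)
  with assms[of "- c / k"] eq show False by simp
qed

lemma psd_null:
  assumes "psd A" "qform A v = 0" shows "A *v v = 0"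
proof -
  have h: "adjoint A = A" using assms(1) by (simp add: psd_def)
  have "Re (cinner y (A *v v)) = 0" for y
  proof -
    have "0 \<le> t * (2 * Re (cinner y (A *v v))) + t^2 * Re (qform A y)" for t :: real
    proof -
      have "0 \<le> Re (qform A (v + complex_of_real t *s y))" using assms(1) by (simp add: psd_def)
      also have "qform A (v + complex_of_real t *s y) =
          qform A v + qform A (complex_of_real t *s y) + cinner v (A *v (complex_of_real t *s y))
          + cinner (complex_of_real t *s y) (A *v v)" by (rule qform_add)
      also have "cinner v (A *v (complex_of_real t *s y)) = complex_of_real t * cnj (cinner y (A *v v))"
        by (simp add: mv_scale cinner_scale_right) (metis cinner_cnj cinner_herm h)
      finally show ?thesis using assms(2)
        by (simp add: qform_scale cinner_scale_left power2_eq_square algebra_simps)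
    qed
    from real_quad_zero[OF this] show ?thesis by simp
  qed
  hence "Re (cinner (A *v v) (A *v v)) = 0" by blast
  hence "cinner (A *v v) (A *v v) = 0" by (simp add: cinner_self)
  thus ?thesis by (simp add: cinner_self_eq_0)
qed

lemma proj_herm: "is_proj P \<Longrightarrow> adjoint P = P" by (simp add: is_proj_def)

lemma proj_idem_mv: "is_proj P \<Longrightarrow> P *v (P *v x) = P *v x"
  by (simp add: is_proj_def matrix_vector_mul_assoc)

lemma proj_qform: "is_proj P \<Longrightarrow> qform P x = cinner (P *v x) (P *v x)"
  by (metis cinner_herm proj_herm proj_idem_mv qform_cinner)

lemma proj_psd: "is_proj P \<Longrightarrow> psd P"
  unfolding psd_def by (simp add: proj_herm proj_qform cinner_self)

lemma proj_compl: assumes h: "is_proj P" shows "is_proj (mat 1 - P)"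
proof -
  have "(mat 1 - P) ** (mat 1 - P) = mat 1 - P"
    by (rule mat_eq_mv) (simp add: mv_mdiff mv_diff proj_idem_mv[OF h] flip: matrix_vector_mul_assoc)
  moreover have "adjoint (mat 1 - P) = mat 1 - P" by (simp add: adjoint_diff proj_herm[OF h])
  ultimately show ?thesis by (simp add: is_proj_def)
qed

lemma mat1_minus_minus[simp]: "mat 1 - (mat 1 - P) = (P::complex^'n^'n)"
  by simp

lemma conj_form_entry: "(adjoint V ** A ** V)$i$i = qform A (column i V)"
proof -
  have "(adjoint V ** A ** V)$i$i = (\<Sum>l\<in>UNIV. (\<Sum>k\<in>UNIV. cnj (V$k$i) * A$k$l) * V$l$i)"
    by (simp add: matrix_matrix_mult_def adjoint_def)
  also have "\<dots> = (\<Sum>l\<in>UNIV. \<Sum>k\<in>UNIV. cnj (V$k$i) * A$k$l * V$l$i)"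
    by (simp add: sum_distrib_right)
  also have "\<dots> = (\<Sum>k\<in>UNIV. \<Sum>l\<in>UNIV. cnj (V$k$i) * A$k$l * V$l$i)"
    by (rule sum.swap)
  also have "\<dots> = qform A (column i V)"
    by (simp add: qform_def matrix_vector_mult_def column_def sum_distrib_left mult.assoc)
  finally show ?thesis .
qed

lemma trace_conj_form: "trace (adjoint V ** A ** V) = (\<Sum>i\<in>UNIV. qform A (column i V))"
  unfolding trace_def by (simp add: conj_form_entry)

lemma trace_conj_psd:
  assumes "psd A"
  shows "trace (adjoint V ** A ** V) = complex_of_real (Re (trace (adjoint V ** A ** V)))"
    and "Re (trace (adjoint V ** A ** V)) \<ge> 0"
proof -
  have q: "Im (qform A x) = 0" "Re (qform A x) \<ge> 0" for x using assms by (auto simp: psd_def)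
  have i: "Im (trace (adjoint V ** A ** V)) = 0"
    unfolding trace_conj_form Im_sum using q(1) by simp
  show "Re (trace (adjoint V ** A ** V)) \<ge> 0"
    unfolding trace_conj_form Re_sum using q(2) by (simp add: sum_nonneg)
  show "trace (adjoint V ** A ** V) = complex_of_real (Re (trace (adjoint V ** A ** V)))"
    using i by (simp add: complex_eq_iff)
qed

lemma trace_proj_left: assumes "is_proj M" shows "trace (M ** A) = trace (adjoint M ** A ** M)"
proof -
  have "trace (M ** A) = trace ((M ** M) ** A)" using assms by (simp add: is_proj_def)
  also have "\<dots> = trace (M ** (M ** A))" by (simp add: matrix_mul_assoc)
  also have "\<dots> = trace ((M ** A) ** M)" by (rule trace_mul_sym)
  finally show ?thesis using assms by (simp add: is_proj_def)
qed

lemma trace_proj_right: "is_proj M \<Longrightarrow> trace (A ** M) = trace (adjoint M ** A ** M)"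
  using trace_mul_sym[of A M] trace_proj_left[of M A] by simp

lemma trace_proj_psd:
  assumes "is_proj M" "psd A"
  shows "trace (A ** M) = complex_of_real (Re (trace (A ** M)))" "Re (trace (A ** M)) \<ge> 0"
        "trace (M ** A) = trace (A ** M)"
proof -
  note e = trace_proj_right[OF assms(1), of A]
  show "trace (A ** M) = complex_of_real (Re (trace (A ** M)))"
    unfolding e by (rule trace_conj_psd(1)[OF assms(2)])
  show "Re (trace (A ** M)) \<ge> 0"
    unfolding e by (rule trace_conj_psd(2)[OF assms(2)])
  show "trace (M ** A) = trace (A ** M)" by (rule trace_mul_sym)
qed

lemma trace_compl: "trace (A ** (mat 1 - T)) = trace A - trace (A ** (T::complex^'n^'n))"
proof -
  have "A ** (mat 1 - T) = A - A ** T"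
    by (rule mat_eq_mv) (simp add: mv_mdiff mv_diff flip: matrix_vector_mul_assoc)
  thus ?thesis by (simp add: trace_sub)
qed



definition cdiag :: "('n \<Rightarrow> complex) \<Rightarrow> complex^'n^'n" where
  "cdiag d = (\<chi> i j. if i = j then d i else 0)"

lemma norm_one_cinner: "norm x = 1 \<longleftrightarrow> cinner x x = 1"
proof -
  have "cinner x x = 1 \<longleftrightarrow> (norm x)^2 = 1" unfolding cinner_self by (rule of_real_eq_1_iff)
  also have "\<dots> \<longleftrightarrow> norm x = 1" by (simp add: power2_eq_1_iff) (smt (verit) norm_ge_zero)
  finally show ?thesis by simp
qed

lemma qform_id: "qform (mat 1) z = cinner z z"
  by (simp add: qform_cinner)

lemma herm_expand:
  assumes h: "adjoint A = A"
  shows "Re (qform A (x + complex_of_real t *s y)) =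
         Re (qform A x) + 2 * t * Re (cinner y (A *v x)) + t^2 * Re (qform A y)"
proof -
  have "qform A (x + complex_of_real t *s y) =
          qform A x + qform A (complex_of_real t *s y) + cinner x (A *v (complex_of_real t *s y))
          + cinner (complex_of_real t *s y) (A *v x)" by (rule qform_add)
  also have "cinner x (A *v (complex_of_real t *s y)) = complex_of_real t * cnj (cinner y (A *v x))"
    by (simp add: mv_scale cinner_scale_right) (metis cinner_cnj cinner_herm h)
  finally show ?thesis
    by (simp add: qform_scale cinner_scale_left power2_eq_square algebra_simps)
qed

lemma kernel_exists:
  fixes f :: "nat \<Rightarrow> complex^'n"
  assumes "k < CARD('n)"
  shows "\<exists>w. w \<noteq> 0 \<and> (\<forall>j<k. cinner (f j) w = 0)"
proof -
  obtain h :: "nat \<Rightarrow> 'n" where h: "bij_betw h {0..<CARD('n)} UNIV"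
    using ex_bij_betw_nat_finite[of "UNIV::'n set"] by auto
  define g where "g = inv_into {0..<CARD('n)} h"
  have gh: "g (h j) = j" if "j < CARD('n)" for j
    using h that unfolding g_def by (simp add: bij_betw_def inv_into_f_f)
  define B :: "complex^'n^'n" where "B = (\<chi> r s. if g r < k then cnj (f (g r) $ s) else 0)"
  have "\<exists>w. B *v w = 0 \<and> w \<noteq> 0"
  proof (rule ccontr)
    assume "\<not> ?thesis"
    hence "\<forall>x. B *v x = 0 \<longrightarrow> x = 0" by blast
    then obtain C where "C ** B = mat 1" using matrix_left_invertible_ker by blast
    hence BC: "B ** C = mat 1" using matrix_left_right_inverse by blast
    have "(B ** C) $ h k $ h k = 0"
      using gh[OF assms] by (simp add: matrix_matrix_mult_def B_def)
    with BC show False by (simp add: mat_def)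
  qed
  then obtain w where w: "B *v w = 0" "w \<noteq> 0" by blast
  have "cinner (f j) w = 0" if "j < k" for j
  proof -
    have "(B *v w) $ h j = cinner (f j) w"
      using gh[of j] that assms by (simp add: matrix_vector_mult_def B_def cinner_def)
    with w show ?thesis by simp
  qed
  with w show ?thesis by blast
qed

lemma eigen_step:
  fixes A :: "complex^'n^'n" and f :: "nat \<Rightarrow> complex^'n"
  assumes herm: "adjoint A = A" and k: "k < CARD('n)"
    and eig: "\<And>j. j < k \<Longrightarrow> A *v f j = complex_of_real (\<mu> j) *s f j"
  shows "\<exists>x M. cinner x x = 1 \<and> (\<forall>j<k. cinner (f j) x = 0) \<and> A *v x = complex_of_real M *s x"
proof -
  define K where "K = sphere (0::complex^'n) 1 \<inter> (\<Inter>j\<in>{..<k}. {x. cinner (f j) x = 0})"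
  have cont: "continuous_on UNIV (\<lambda>x::complex^'n. cinner v x)" for v
    unfolding cinner_def by (intro continuous_intros)
  have "closed (\<Inter>j\<in>{..<k}. {x. cinner (f j) x = 0})"
    by (intro closed_INT ballI closed_Collect_eq cont continuous_on_const)
  hence compK: "compact K" unfolding K_def by (intro compact_Int_closed compact_sphere)
  obtain w where w: "w \<noteq> 0" "\<forall>j<k. cinner (f j) w = 0" using kernel_exists[OF k] by blast
  define w1 where "w1 = complex_of_real (1 / norm w) *s w"
  have "cinner w1 w1 = 1"
    using w(1) unfolding w1_def cinner_scale_left cinner_scale_right by (simp add: cinner_self power2_eq_square)
  hence "w1 \<in> K" using w(2) by (simp add: K_def norm_one_cinner w1_def cinner_scale_right)
  hence Kne: "K \<noteq> {}" by blast
  have contq: "continuous_on K (\<lambda>x::complex^'n. Re (qform A x))"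
    unfolding qform_def matrix_vector_mult_def by (intro continuous_intros)
  obtain x where xK: "x \<in> K" and xmax: "\<And>y. y \<in> K \<Longrightarrow> Re (qform A y) \<le> Re (qform A x)"
    using continuous_attains_sup[OF compK Kne contq] by blast
  define M where "M = Re (qform A x)"
  have x1: "cinner x x = 1" and xo: "\<forall>j<k. cinner (f j) x = 0"
    using xK by (auto simp: K_def norm_one_cinner)
  have claim1: "Re (qform A z) \<le> M * Re (cinner z z)" if zo: "\<forall>j<k. cinner (f j) z = 0" for z
  proof (cases "z = 0")
    case True thus ?thesis by (simp add: qform_def)
  next
    case False
    define c where "c = complex_of_real (1 / norm z)"
    have "cinner (c *s z) (c *s z) = 1"
      using False unfolding c_def cinner_scale_left cinner_scale_right by (simp add: cinner_self power2_eq_square)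
    hence "c *s z \<in> K" using zo by (simp add: K_def norm_one_cinner cinner_scale_right)
    hence "Re (qform A (c *s z)) \<le> M" using xmax M_def by blast
    moreover have "Re (qform A (c *s z)) = Re (qform A z) / (norm z)^2"
      by (simp add: qform_scale c_def power2_eq_square)
    ultimately have "Re (qform A z) \<le> M * (norm z)^2"
      using False by (simp add: divide_le_eq)
    thus ?thesis by (simp add: cinner_self)
  qed
  define v where "v = A *v x - complex_of_real M *s x"
  have claim2: "Re (cinner y v) = 0" if yo: "\<forall>j<k. cinner (f j) y = 0" for y
  proof -
    have "0 \<le> t * (2 * M * Re (cinner y x) - 2 * Re (cinner y (A *v x))) + t^2 * (M * Re (cinner y y) - Re (qform A y))"
      for t :: real
    proof -
      have zo: "\<forall>j<k. cinner (f j) (x + complex_of_real t *s y) = 0"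
        using xo yo by (simp add: cinner_add_right cinner_scale_right)
      have e1: "Re (qform A (x + complex_of_real t *s y)) = M + 2 * t * Re (cinner y (A *v x)) + t^2 * Re (qform A y)"
        using herm_expand[OF herm] M_def by simp
      have e2: "Re (cinner (x + complex_of_real t *s y) (x + complex_of_real t *s y)) = 1 + 2 * t * Re (cinner y x) + t^2 * Re (cinner y y)"
        using herm_expand[of "mat 1" x t y] x1 by (simp add: qform_id)
      from claim1[OF zo] e1 e2 show ?thesis by (simp add: algebra_simps power2_eq_square)
    qed
    from real_quad_zero[OF this] have "M * Re (cinner y x) = Re (cinner y (A *v x))" by simp
    thus ?thesis by (simp add: v_def cinner_diff_right cinner_scale_right)
  qed
  have claim3: "cinner y v = 0" if yo: "\<forall>j<k. cinner (f j) y = 0" for y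
  proof -
    have "\<forall>j<k. cinner (f j) (\<i> *s y) = 0" using yo by (simp add: cinner_scale_right)
    from claim2[OF this] have "Im (cinner y v) = 0" by (simp add: cinner_scale_left)
    with claim2[OF yo] show ?thesis by (simp add: complex_eq_iff)
  qed
  have vo: "\<forall>j<k. cinner (f j) v = 0"
  proof (intro allI impI)
    fix j assume j: "j < k"
    have "cinner (f j) (A *v x) = cinner (A *v f j) x" by (rule cinner_herm[OF herm])
    also have "\<dots> = 0" using eig[OF j] xo j by (simp add: cinner_scale_left)
    finally show "cinner (f j) v = 0" using xo j by (simp add: v_def cinner_diff_right cinner_scale_right)
  qed
  have "v = 0" using claim3[OF vo] by (simp add: cinner_self_eq_0)
  hence "A *v x = complex_of_real M *s x" by (simp add: v_def)
  with x1 xo show ?thesis by blast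
qed



lemma orth_family:
  fixes A :: "complex^'n^'n"
  assumes herm: "adjoint A = A"
  shows "k \<le> CARD('n) \<Longrightarrow> \<exists>f \<mu>. (\<forall>j<k. \<forall>l<k. cinner (f j) (f l) = (if j = l then 1 else 0))
            \<and> (\<forall>j<k. A *v f j = complex_of_real (\<mu> j) *s f j)"
proof (induction k)
  case 0 show ?case by simp
next
  case (Suc k)
  then obtain f \<mu> where o: "\<forall>j<k. \<forall>l<k. cinner (f j) (f l) = (if j = l then 1 else 0)"
      and e: "\<forall>j<k. A *v f j = complex_of_real (\<mu> j) *s f j" by auto
  from Suc.prems have k: "k < CARD('n)" by simp
  obtain x M where x: "cinner x x = 1" "\<forall>j<k. cinner (f j) x = 0" "A *v x = complex_of_real M *s x"
    using eigen_step[OF herm k, of f \<mu>] e by blast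
  define f' where "f' = f(k := x)"
  define \<mu>' where "\<mu>' = \<mu>(k := M)"
  have "\<forall>j<Suc k. \<forall>l<Suc k. cinner (f' j) (f' l) = (if j = l then 1 else 0)"
  proof (intro allI impI)
    fix j l assume j: "j < Suc k" and l: "l < Suc k"
    show "cinner (f' j) (f' l) = (if j = l then 1 else 0)"
    proof (cases "j = k"; cases "l = k")
      assume "j = k" "l \<noteq> k"
      hence "cinner (f' j) (f' l) = cnj (cinner (f l) x)" using l by (simp add: f'_def cinner_cnj)
      thus ?thesis using x(2) l \<open>j = k\<close> \<open>l \<noteq> k\<close> by simp
    qed (use o x j l in \<open>auto simp: f'_def\<close>)
  qed
  moreover have "\<forall>j<Suc k. A *v f' j = complex_of_real (\<mu>' j) *s f' j"
    using e x(3) by (auto simp: f'_def \<mu>'_def less_Suc_eq)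
  ultimately show ?case by blast
qed

lemma cdiag_mult: "cdiag a ** cdiag b = cdiag (\<lambda>i. a i * b i :: complex)" for a b :: "'n::finite \<Rightarrow> complex"
proof -
  have "(\<Sum>k\<in>UNIV. (if i = k then a i else 0) * (if k = j then b k else 0)) =
        (if i = j then a i * b i else 0)" for i j :: 'n
  proof -
    have "(\<Sum>k\<in>UNIV. (if i = k then a i else 0) * (if k = j then b k else 0)) =
          (\<Sum>k\<in>UNIV. if k = i then a i * (if i = j then b i else 0) else 0)"
      by (rule sum.cong) auto
    thus ?thesis by simp
  qed
  thus ?thesis by (simp add: cdiag_def vec_eq_iff matrix_matrix_mult_def)
qed

lemma adjoint_cdiag: "adjoint (cdiag a) = cdiag (\<lambda>i. cnj (a i))"
  by (simp add: cdiag_def adjoint_def vec_eq_iff)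

lemma spectral:
  fixes A :: "complex^'n^'n"
  assumes herm: "adjoint A = A"
  shows "\<exists>U d. adjoint U ** U = mat 1 \<and> U ** adjoint U = mat 1 \<and>
            A = U ** cdiag (\<lambda>i. complex_of_real (d i)) ** adjoint U"
proof -
  obtain f \<mu> where o: "\<forall>j<CARD('n). \<forall>l<CARD('n). cinner (f j) (f l) = (if j = l then 1 else 0)"
      and e: "\<forall>j<CARD('n). A *v f j = complex_of_real (\<mu> j) *s f j"
    using orth_family[OF herm order.refl] by blast
  obtain h :: "nat \<Rightarrow> 'n" where h: "bij_betw h {0..<CARD('n)} UNIV"
    using ex_bij_betw_nat_finite[of "UNIV::'n set"] by auto
  define g where "g = inv_into {0..<CARD('n)} h"
  have g: "bij_betw g UNIV {0..<CARD('n)}" unfolding g_def by (rule bij_betw_inv_into[OF h])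
  have glt: "g s < CARD('n)" for s using g by (auto simp: bij_betw_def)
  have ginj: "g s = g s' \<longleftrightarrow> s = s'" for s s' using g by (auto simp: bij_betw_def inj_on_def)
  define U :: "complex^'n^'n" where "U = (\<chi> r s. f (g s) $ r)"
  define d where "d s = \<mu> (g s)" for s
  have UU: "adjoint U ** U = mat 1"
  proof -
    have "(adjoint U ** U) $ s $ s' = cinner (f (g s)) (f (g s'))" for s s'
      by (simp add: U_def adjoint_def matrix_matrix_mult_def cinner_def)
    thus ?thesis using o glt ginj by (simp add: vec_eq_iff mat_def)
  qed
  hence UU': "U ** adjoint U = mat 1" using matrix_left_right_inverse by blast
  have AU: "A ** U = U ** cdiag (\<lambda>i. complex_of_real (d i))"
  proof -
    have "(A ** U) $ r $ s = (A *v f (g s)) $ r" for r s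
      by (simp add: U_def matrix_matrix_mult_def matrix_vector_mult_def)
    moreover have "(U ** cdiag (\<lambda>i. complex_of_real (d i))) $ r $ s = (complex_of_real (\<mu> (g s)) *s f (g s)) $ r" for r s
      by (simp add: U_def matrix_matrix_mult_def cdiag_def d_def if_distrib mult.commute cong: if_cong)
    ultimately show ?thesis using e glt by (simp add: vec_eq_iff)
  qed
  have "A = A ** (U ** adjoint U)" using UU' by simp
  also have "\<dots> = U ** cdiag (\<lambda>i. complex_of_real (d i)) ** adjoint U"
    by (simp add: matrix_mul_assoc AU)
  finally show ?thesis using UU UU' by blast
qed



definition gm :: "real \<Rightarrow> real \<Rightarrow> real \<Rightarrow> real" where
  "gm \<alpha> a b = a powr \<alpha> * b powr (1 - \<alpha>)"

lemma gm_nonneg: "gm \<alpha> a b \<ge> 0" by (simp add: gm_def)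

lemma gm_zero1[simp]: "gm \<alpha> 0 b = 0" by (simp add: gm_def)
lemma gm_zero2[simp]: "gm \<alpha> a 0 = 0" by (simp add: gm_def)

lemma amgm:
  assumes "0 < \<alpha>" "\<alpha> < 1" "0 \<le> x" "0 \<le> y"
  shows "gm \<alpha> x y \<le> \<alpha> * x + (1 - \<alpha>) * y"
proof (cases "x = 0 \<or> y = 0")
  case True thus ?thesis using assms by auto
next
  case False
  thus ?thesis using Youngs_inequality_0[of \<alpha> "1-\<alpha>" x y] assms by (simp add: gm_def)
qed

lemma amgm_strict:
  assumes a: "0 < \<alpha>" "\<alpha> < 1" and xy: "0 \<le> x" "0 \<le> y" "x \<noteq> y"
  shows "gm \<alpha> x y < \<alpha> * x + (1 - \<alpha>) * y"
proof (cases "x = 0 \<or> y = 0")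
  case True thus ?thesis using assms by auto
next
  case False
  hence xp: "x > 0" "y > 0" using xy by auto
  define s where "s = sqrt x"
  define u where "u = sqrt y"
  have sp: "s > 0" "u > 0" using xp by (auto simp: s_def u_def)
  have x: "x = s * s" and y: "y = u * u" using xp by (auto simp: s_def u_def)
  have su: "s \<noteq> u" using xy(3) x y by auto
  have "gm \<alpha> x y = gm \<alpha> s u * gm \<alpha> s u"
    unfolding x y gm_def using sp by (simp add: powr_mult)
  also have "\<dots> \<le> (\<alpha> * s + (1 - \<alpha>) * u) * (\<alpha> * s + (1 - \<alpha>) * u)"
    using amgm[OF a, of s u] sp gm_nonneg[of \<alpha> s u] by (intro mult_mono) auto
  also have "\<dots> < \<alpha> * x + (1 - \<alpha>) * y"
  proof -
    have "\<alpha> * x + (1 - \<alpha>) * y - (\<alpha> * s + (1 - \<alpha>) * u) * (\<alpha> * s + (1 - \<alpha>) * u)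
          = \<alpha> * (1 - \<alpha>) * ((s - u) * (s - u))" unfolding x y by (simp add: algebra_simps)
    moreover have "(s - u) * (s - u) > 0" using su by (auto simp: zero_less_mult_iff)
    hence "\<alpha> * (1 - \<alpha>) * ((s - u) * (s - u)) > 0" using a by simp
    ultimately show ?thesis by linarith
  qed
  finally show ?thesis .
qed

lemma gm_homog:
  assumes "0 \<le> c" "0 \<le> a" "0 \<le> b"
  shows "gm \<alpha> (c * a) (c * b) = c * gm \<alpha> a b"
proof (cases "c = 0")
  case True thus ?thesis by simp
next
  case False
  hence c: "c > 0" using assms by simp
  have "gm \<alpha> (c * a) (c * b) = (c powr \<alpha> * c powr (1 - \<alpha>)) * gm \<alpha> a b"
    using assms by (simp add: gm_def powr_mult algebra_simps)
  also have "c powr \<alpha> * c powr (1 - \<alpha>) = c" using c by (simp flip: powr_add)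
  finally show ?thesis .
qed

lemma gm_supadd_gen:
  assumes a: "0 < \<alpha>" "\<alpha> < 1" and nn: "0 \<le> a1" "0 \<le> a2" "0 \<le> b1" "0 \<le> b2"
  shows "gm \<alpha> a1 b1 + gm \<alpha> a2 b2 \<le> gm \<alpha> (a1 + a2) (b1 + b2)"
    and "a1 * (b1 + b2) \<noteq> b1 * (a1 + a2) \<Longrightarrow> gm \<alpha> a1 b1 + gm \<alpha> a2 b2 < gm \<alpha> (a1 + a2) (b1 + b2)"
proof -
  define A where "A = a1 + a2"
  define B where "B = b1 + b2"
  have AB: "A \<ge> 0" "B \<ge> 0" using nn by (auto simp: A_def B_def)
  have main: "gm \<alpha> a1 b1 + gm \<alpha> a2 b2 \<le> gm \<alpha> A B \<and>
      (a1 * B \<noteq> b1 * A \<longrightarrow> gm \<alpha> a1 b1 + gm \<alpha> a2 b2 < gm \<alpha> A B)"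
  proof (cases "A = 0 \<or> B = 0")
    case True
    hence "(a1 = 0 \<and> a2 = 0) \<or> (b1 = 0 \<and> b2 = 0)" using nn by (auto simp: A_def B_def)
    thus ?thesis using True nn by (auto simp: A_def B_def)
  next
    case False
    hence Ap: "A > 0" "B > 0" using AB by auto
    have dec: "gm \<alpha> ai bi = gm \<alpha> A B * gm \<alpha> (ai / A) (bi / B)" if "0 \<le> ai" "0 \<le> bi" for ai bi
    proof -
      have e1: "ai powr \<alpha> = A powr \<alpha> * (ai / A) powr \<alpha>"
        by (subst powr_mult[symmetric]) (use Ap that in auto)
      have e2: "bi powr (1 - \<alpha>) = B powr (1 - \<alpha>) * (bi / B) powr (1 - \<alpha>)"
        by (subst powr_mult[symmetric]) (use Ap that in auto)
      show ?thesis unfolding gm_def by (subst e1, subst e2) (simp add: algebra_simps)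
    qed
    have g0: "gm \<alpha> A B > 0" using Ap by (simp add: gm_def)
    have s1: "gm \<alpha> (a1 / A) (b1 / B) \<le> \<alpha> * (a1 / A) + (1 - \<alpha>) * (b1 / B)"
      using amgm[OF a, of "a1 / A" "b1 / B"] nn Ap by simp
    have s2: "gm \<alpha> (a2 / A) (b2 / B) \<le> \<alpha> * (a2 / A) + (1 - \<alpha>) * (b2 / B)"
      using amgm[OF a, of "a2 / A" "b2 / B"] nn Ap by simp
    have sum1: "\<alpha> * (a1 / A) + (1 - \<alpha>) * (b1 / B) + (\<alpha> * (a2 / A) + (1 - \<alpha>) * (b2 / B)) = 1"
    proof -
      have q1: "a1 / A + a2 / A = 1" using Ap unfolding A_def by (simp flip: add_divide_distrib)
      have q2: "b1 / B + b2 / B = 1" using Ap unfolding B_def by (simp flip: add_divide_distrib)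
      have "\<alpha> * (a1 / A) + (1 - \<alpha>) * (b1 / B) + (\<alpha> * (a2 / A) + (1 - \<alpha>) * (b2 / B))
            = \<alpha> * (a1 / A + a2 / A) + (1 - \<alpha>) * (b1 / B + b2 / B)" by (simp add: algebra_simps)
      thus ?thesis using q1 q2 by simp
    qed
    have "gm \<alpha> a1 b1 + gm \<alpha> a2 b2 = gm \<alpha> A B * (gm \<alpha> (a1 / A) (b1 / B) + gm \<alpha> (a2 / A) (b2 / B))"
      using dec nn by (simp add: distrib_left)
    moreover have "gm \<alpha> (a1 / A) (b1 / B) + gm \<alpha> (a2 / A) (b2 / B) \<le> 1" using s1 s2 sum1 by linarith
    moreover have "a1 * B \<noteq> b1 * A \<Longrightarrow> gm \<alpha> (a1 / A) (b1 / B) + gm \<alpha> (a2 / A) (b2 / B) < 1"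
    proof -
      assume ne: "a1 * B \<noteq> b1 * A"
      have "a1 / A \<noteq> b1 / B" using ne Ap by (simp add: field_simps)
      hence "gm \<alpha> (a1 / A) (b1 / B) < \<alpha> * (a1 / A) + (1 - \<alpha>) * (b1 / B)"
        using amgm_strict[OF a, of "a1 / A" "b1 / B"] nn Ap by simp
      thus ?thesis using s2 sum1 by linarith
    qed
    ultimately show ?thesis using g0 by (auto simp: mult_le_cancel_left1 mult_less_cancel_left1)
  qed
  thus "gm \<alpha> a1 b1 + gm \<alpha> a2 b2 \<le> gm \<alpha> (a1 + a2) (b1 + b2)" by (simp add: A_def B_def)
  show "a1 * (b1 + b2) \<noteq> b1 * (a1 + a2) \<Longrightarrow> gm \<alpha> a1 b1 + gm \<alpha> a2 b2 < gm \<alpha> (a1 + a2) (b1 + b2)"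
    using main by (simp add: A_def B_def)
qed

definition Fb :: "real \<Rightarrow> real \<Rightarrow> real \<Rightarrow> real" where
  "Fb \<alpha> a b = gm \<alpha> a b + gm \<alpha> (1 - a) (1 - b)"

lemma Fb_concave:
  assumes a: "0 < \<alpha>" "\<alpha> < 1" and r: "0 \<le> a0" "a0 \<le> 1" "0 \<le> b0" "b0 \<le> 1" "0 \<le> a1" "a1 \<le> 1"
      "0 \<le> b1" "b1 \<le> 1" and th: "0 \<le> \<theta>" "\<theta> \<le> 1"
  shows "min (Fb \<alpha> a0 b0) (Fb \<alpha> a1 b1) \<le> Fb \<alpha> ((1 - \<theta>) * a0 + \<theta> * a1) ((1 - \<theta>) * b0 + \<theta> * b1)"
proof -
  have c1: "gm \<alpha> ((1 - \<theta>) * a0 + \<theta> * a1) ((1 - \<theta>) * b0 + \<theta> * b1) \<ge> (1 - \<theta>) * gm \<alpha> a0 b0 + \<theta> * gm \<alpha> a1 b1"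
    using gm_supadd_gen(1)[OF a, of "(1 - \<theta>) * a0" "\<theta> * a1" "(1 - \<theta>) * b0" "\<theta> * b1"]
      gm_homog[of "1 - \<theta>" a0 b0 \<alpha>] gm_homog[of \<theta> a1 b1 \<alpha>] r th by simp
  have c2: "gm \<alpha> (1 - ((1 - \<theta>) * a0 + \<theta> * a1)) (1 - ((1 - \<theta>) * b0 + \<theta> * b1)) \<ge>
      (1 - \<theta>) * gm \<alpha> (1 - a0) (1 - b0) + \<theta> * gm \<alpha> (1 - a1) (1 - b1)"
  proof -
    have e1: "1 - ((1 - \<theta>) * a0 + \<theta> * a1) = (1 - \<theta>) * (1 - a0) + \<theta> * (1 - a1)" by (simp add: algebra_simps)
    have e2: "1 - ((1 - \<theta>) * b0 + \<theta> * b1) = (1 - \<theta>) * (1 - b0) + \<theta> * (1 - b1)" by (simp add: algebra_simps)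
    show ?thesis unfolding e1 e2
      using gm_supadd_gen(1)[OF a, of "(1 - \<theta>) * (1 - a0)" "\<theta> * (1 - a1)" "(1 - \<theta>) * (1 - b0)" "\<theta> * (1 - b1)"]
        gm_homog[of "1 - \<theta>" "1 - a0" "1 - b0" \<alpha>] gm_homog[of \<theta> "1 - a1" "1 - b1" \<alpha>] r th by simp
  qed
  have "(1 - \<theta>) * Fb \<alpha> a0 b0 + \<theta> * Fb \<alpha> a1 b1 \<le> Fb \<alpha> ((1 - \<theta>) * a0 + \<theta> * a1) ((1 - \<theta>) * b0 + \<theta> * b1)"
    using c1 c2 unfolding Fb_def by (simp add: algebra_simps)
  moreover have "min (Fb \<alpha> a0 b0) (Fb \<alpha> a1 b1) \<le> (1 - \<theta>) * Fb \<alpha> a0 b0 + \<theta> * Fb \<alpha> a1 b1"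
  proof -
    have "(1 - \<theta>) * min (Fb \<alpha> a0 b0) (Fb \<alpha> a1 b1) \<le> (1 - \<theta>) * Fb \<alpha> a0 b0" using th by (intro mult_left_mono) auto
    moreover have "\<theta> * min (Fb \<alpha> a0 b0) (Fb \<alpha> a1 b1) \<le> \<theta> * Fb \<alpha> a1 b1" using th by (intro mult_left_mono) auto
    ultimately show ?thesis by (simp add: algebra_simps)
  qed
  ultimately show ?thesis by linarith
qed

lemma vertex_aux:
  fixes r t :: "'n::finite \<Rightarrow> real"
  assumes a: "0 < \<alpha>" "\<alpha> < 1" and rt: "\<And>i. 0 \<le> r i" "\<And>i. 0 \<le> t i" "sum r UNIV = 1" "sum t UNIV = 1"
  shows "finite J \<Longrightarrow> \<forall>lm. (\<forall>i. 0 \<le> lm i \<and> lm i \<le> 1) \<longrightarrow> (\<forall>i. i \<notin> J \<longrightarrow> lm i = 0 \<or> lm i = 1) \<longrightarrow>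
     (\<exists>e. (\<forall>i. e i = 0 \<or> e i = 1) \<and>
        Fb \<alpha> (\<Sum>i\<in>UNIV. e i * r i) (\<Sum>i\<in>UNIV. e i * t i) \<le> Fb \<alpha> (\<Sum>i\<in>UNIV. lm i * r i) (\<Sum>i\<in>UNIV. lm i * t i))"
proof (induction J rule: finite_induct)
  case empty
  show ?case
  proof (intro allI impI)
    fix lm :: "'n \<Rightarrow> real"
    assume "\<forall>i. 0 \<le> lm i \<and> lm i \<le> 1" "\<forall>i. i \<notin> {} \<longrightarrow> lm i = 0 \<or> lm i = 1"
    thus "\<exists>e. (\<forall>i. e i = 0 \<or> e i = 1) \<and>
        Fb \<alpha> (\<Sum>i\<in>UNIV. e i * r i) (\<Sum>i\<in>UNIV. e i * t i) \<le> Fb \<alpha> (\<Sum>i\<in>UNIV. lm i * r i) (\<Sum>i\<in>UNIV. lm i * t i)"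
      by (intro exI[of _ lm]) auto
  qed
next
  case (insert j J)
  show ?case
  proof (intro allI impI)
    fix lm :: "'n \<Rightarrow> real"
    assume l01: "\<forall>i. 0 \<le> lm i \<and> lm i \<le> 1" and lJ: "\<forall>i. i \<notin> insert j J \<longrightarrow> lm i = 0 \<or> lm i = 1"
    define l0 where "l0 = lm(j := 0)"
    define l1 where "l1 = lm(j := 1)"
    have bnd: "0 \<le> (\<Sum>i\<in>UNIV. m i * s i) \<and> (\<Sum>i\<in>UNIV. m i * s i) \<le> 1"
      if "\<forall>i. 0 \<le> m i \<and> m i \<le> 1" "\<And>i. 0 \<le> s i" "sum s UNIV = 1" for m s :: "'n \<Rightarrow> real"
    proof
      show "0 \<le> (\<Sum>i\<in>UNIV. m i * s i)" using that by (intro sum_nonneg) auto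
      have "(\<Sum>i\<in>UNIV. m i * s i) \<le> (\<Sum>i\<in>UNIV. s i)"
        using that by (intro sum_mono) (simp add: mult_left_le_one_le)
      thus "(\<Sum>i\<in>UNIV. m i * s i) \<le> 1" using that by simp
    qed
    have l0p: "\<forall>i. 0 \<le> l0 i \<and> l0 i \<le> 1" "\<forall>i. i \<notin> J \<longrightarrow> l0 i = 0 \<or> l0 i = 1"
      using l01 lJ by (auto simp: l0_def)
    have l1p: "\<forall>i. 0 \<le> l1 i \<and> l1 i \<le> 1" "\<forall>i. i \<notin> J \<longrightarrow> l1 i = 0 \<or> l1 i = 1"
      using l01 lJ by (auto simp: l1_def)
    obtain e0 where e0: "\<forall>i. e0 i = 0 \<or> e0 i = 1"
      "Fb \<alpha> (\<Sum>i\<in>UNIV. e0 i * r i) (\<Sum>i\<in>UNIV. e0 i * t i) \<le> Fb \<alpha> (\<Sum>i\<in>UNIV. l0 i * r i) (\<Sum>i\<in>UNIV. l0 i * t i)"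
      using insert.IH l0p by blast
    obtain e1 where e1: "\<forall>i. e1 i = 0 \<or> e1 i = 1"
      "Fb \<alpha> (\<Sum>i\<in>UNIV. e1 i * r i) (\<Sum>i\<in>UNIV. e1 i * t i) \<le> Fb \<alpha> (\<Sum>i\<in>UNIV. l1 i * r i) (\<Sum>i\<in>UNIV. l1 i * t i)"
      using insert.IH l1p by blast
    have lin: "(\<Sum>i\<in>UNIV. lm i * s i) = (1 - lm j) * (\<Sum>i\<in>UNIV. l0 i * s i) + lm j * (\<Sum>i\<in>UNIV. l1 i * s i)"
      for s :: "'n \<Rightarrow> real"
    proof -
      have split: "(\<Sum>i\<in>UNIV. m i * s i) = m j * s j + (\<Sum>i\<in>UNIV - {j}. m i * s i)" for m :: "'n \<Rightarrow> real"
        by (simp add: sum.remove)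
      have same: "(\<Sum>i\<in>UNIV - {j}. l0 i * s i) = (\<Sum>i\<in>UNIV - {j}. lm i * s i)"
                 "(\<Sum>i\<in>UNIV - {j}. l1 i * s i) = (\<Sum>i\<in>UNIV - {j}. lm i * s i)"
        by (auto simp: l0_def l1_def intro!: sum.cong)
      show ?thesis unfolding split[of lm] split[of l0] split[of l1] same
        by (simp add: l0_def l1_def algebra_simps)
    qed
    have "min (Fb \<alpha> (\<Sum>i\<in>UNIV. l0 i * r i) (\<Sum>i\<in>UNIV. l0 i * t i)) (Fb \<alpha> (\<Sum>i\<in>UNIV. l1 i * r i) (\<Sum>i\<in>UNIV. l1 i * t i))
          \<le> Fb \<alpha> (\<Sum>i\<in>UNIV. lm i * r i) (\<Sum>i\<in>UNIV. lm i * t i)"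
      unfolding lin[of r] lin[of t]
      using Fb_concave[OF a] bnd[OF l0p(1) rt(1) rt(3)] bnd[OF l0p(1) rt(2) rt(4)]
        bnd[OF l1p(1) rt(1) rt(3)] bnd[OF l1p(1) rt(2) rt(4)] l01 by blast
    thus "\<exists>e. (\<forall>i. e i = 0 \<or> e i = 1) \<and>
        Fb \<alpha> (\<Sum>i\<in>UNIV. e i * r i) (\<Sum>i\<in>UNIV. e i * t i) \<le> Fb \<alpha> (\<Sum>i\<in>UNIV. lm i * r i) (\<Sum>i\<in>UNIV. lm i * t i)"
    proof (cases "Fb \<alpha> (\<Sum>i\<in>UNIV. l0 i * r i) (\<Sum>i\<in>UNIV. l0 i * t i) \<le> Fb \<alpha> (\<Sum>i\<in>UNIV. l1 i * r i) (\<Sum>i\<in>UNIV. l1 i * t i)")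
      case True
      with e0 show ?thesis using \<open>min _ _ \<le> _\<close> by (intro exI[of _ e0]) (auto simp: min_def)
    next
      case False
      with e1 show ?thesis using \<open>min _ _ \<le> _\<close> by (intro exI[of _ e1]) (auto simp: min_def)
    qed
  qed
qed

lemma vertex:
  fixes r t :: "'n::finite \<Rightarrow> real"
  assumes a: "0 < \<alpha>" "\<alpha> < 1" and rt: "\<And>i. 0 \<le> r i" "\<And>i. 0 \<le> t i" "sum r UNIV = 1" "sum t UNIV = 1"
    and l: "\<And>i. 0 \<le> lm i" "\<And>i. lm i \<le> 1"
  shows "\<exists>e. (\<forall>i. e i = 0 \<or> e i = 1) \<and>
        Fb \<alpha> (\<Sum>i\<in>UNIV. e i * r i) (\<Sum>i\<in>UNIV. e i * t i) \<le> Fb \<alpha> (\<Sum>i\<in>UNIV. lm i * r i) (\<Sum>i\<in>UNIV. lm i * t i)"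
  using vertex_aux[OF a rt, of UNIV] l by auto



definition rv :: "real \<Rightarrow> real \<Rightarrow> ereal" where
  "rv \<alpha> s = (if s = 0 then \<infinity> else ereal (ln s / (\<alpha> - 1)))"

lemma renyi_rv: "renyi \<alpha> X p q = rv \<alpha> (\<Sum>x\<in>X. gm \<alpha> (p x) (q x))"
  by (simp add: renyi_def rv_def gm_def Let_def)

lemma rv_mono:
  assumes "\<alpha> < 1" "0 \<le> s1" "s1 \<le> s2" shows "rv \<alpha> s2 \<le> rv \<alpha> s1"
proof (cases "s1 = 0")
  case True thus ?thesis by (simp add: rv_def)
next
  case False
  hence p: "s1 > 0" "s2 > 0" using assms by auto
  have "ln s1 \<le> ln s2" using p assms by simp
  hence "ln s2 / (\<alpha> - 1) \<le> ln s1 / (\<alpha> - 1)" using assms(1) by (simp add: divide_le_eq_1 divide_right_mono_neg)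
  thus ?thesis using p by (simp add: rv_def)
qed

lemma rv_strict:
  assumes "\<alpha> < 1" "0 \<le> s1" "s1 < s2" shows "rv \<alpha> s2 < rv \<alpha> s1"
proof (cases "s1 = 0")
  case True thus ?thesis using assms by (simp add: rv_def)
next
  case False
  hence p: "s1 > 0" "s2 > 0" using assms by auto
  have "ln s1 < ln s2" using p assms by simp
  hence "ln s2 / (\<alpha> - 1) < ln s1 / (\<alpha> - 1)" using assms(1) by (simp add: divide_strict_right_mono_neg)
  thus ?thesis using p by (simp add: rv_def)
qed

lemma test_map_False:
  assumes "trace X = 1" shows "test_map T X False = 1 - Re (trace (X ** T))"
  using assms by (simp add: test_map_def trace_compl)

lemma renyi_test:
  assumes "density \<rho>" "density \<sigma>"
  shows "renyi \<alpha> UNIV (test_map T \<rho>) (test_map T \<sigma>) = rv \<alpha> (Fb \<alpha> (Re (trace (\<rho> ** T))) (Re (trace (\<sigma> ** T))))"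
  using assms by (simp add: renyi_rv UNIV_bool Fb_def test_map_False density_def add.commute)
     (simp add: test_map_def)

lemma mm_diff_left: "A ** (B - C) = A ** B - A ** (C::complex^'n^'n)"
  by (rule mat_eq_mv) (simp add: mv_mdiff mv_diff flip: matrix_vector_mul_assoc)
lemma mm_diff_right: "(B - C) ** A = B ** A - C ** (A::complex^'n^'n)"
  by (rule mat_eq_mv) (simp add: mv_mdiff flip: matrix_vector_mul_assoc)

lemma trace_mult_cdiag: "trace (M ** cdiag c) = (\<Sum>i\<in>UNIV. M$i$i * c i)"
proof -
  have "(M ** cdiag c)$i$i = M$i$i * c i" for i
  proof -
    have "(M ** cdiag c)$i$i = (\<Sum>k\<in>UNIV. if k = i then M$i$k * c k else 0)"
      by (simp add: matrix_matrix_mult_def cdiag_def if_distrib cong: if_cong)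
    thus ?thesis by simp
  qed
  thus ?thesis by (simp add: trace_def)
qed

lemma trace_spec:
  "trace (\<rho> ** (U ** cdiag c ** adjoint U)) = (\<Sum>i\<in>UNIV. (adjoint U ** \<rho> ** U)$i$i * c i)"
proof -
  have "trace (\<rho> ** (U ** cdiag c ** adjoint U)) = trace ((\<rho> ** (U ** cdiag c)) ** adjoint U)"
    by (simp add: matrix_mul_assoc)
  also have "\<dots> = trace (adjoint U ** (\<rho> ** (U ** cdiag c)))" by (rule trace_mul_sym)
  also have "\<dots> = trace ((adjoint U ** \<rho> ** U) ** cdiag c)" by (simp add: matrix_mul_assoc)
  finally show ?thesis by (simp add: trace_mult_cdiag)
qed

lemma re_trace_spec:
  "Re (trace (\<rho> ** (U ** cdiag (\<lambda>i. complex_of_real (c i)) ** adjoint U))) =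
   (\<Sum>i\<in>UNIV. c i * Re ((adjoint U ** \<rho> ** U)$i$i))"
  by (simp add: trace_spec Re_sum mult.commute)

lemma test_to_proj:
  fixes \<rho> \<sigma> T :: "complex^'n^'n"
  assumes dr: "density \<rho>" and ds: "density \<sigma>" and T: "psd T" "loewner_le T (mat 1)"
    and a: "0 < \<alpha>" "\<alpha> < 1"
  shows "\<exists>Q. is_proj Q \<and> Fb \<alpha> (Re (trace (\<rho> ** Q))) (Re (trace (\<sigma> ** Q)))
                 \<le> Fb \<alpha> (Re (trace (\<rho> ** T))) (Re (trace (\<sigma> ** T)))"
proof -
  have herm: "adjoint T = T" using T(1) by (simp add: psd_def)
  obtain U d where UU: "adjoint U ** U = mat 1" and UU': "U ** adjoint U = mat 1"
    and Td: "T = U ** cdiag (\<lambda>i. complex_of_real (d i)) ** adjoint U"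
    using spectral[OF herm] by blast
  define D where "D = cdiag (\<lambda>i. complex_of_real (d i))"
  have UTU: "adjoint U ** T ** U = D"
  proof -
    have "adjoint U ** T ** U = (adjoint U ** U) ** D ** (adjoint U ** U)"
      unfolding Td D_def by (simp add: matrix_mul_assoc)
    thus ?thesis using UU by simp
  qed
  have d0: "d i \<ge> 0" for i
  proof -
    have "qform T (column i U) = complex_of_real (d i)"
      using conj_form_entry[of U T i] UTU by (simp add: D_def cdiag_def)
    thus ?thesis using T(1) unfolding psd_def by (metis Re_complex_of_real)
  qed
  have d1: "d i \<le> 1" for i
  proof -
    have "adjoint U ** (mat 1 - T) ** U = mat 1 - D"
      using UU UTU by (simp add: mm_diff_left mm_diff_right)
    hence "qform (mat 1 - T) (column i U) = 1 - complex_of_real (d i)"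
      using conj_form_entry[of U "mat 1 - T" i] by (simp add: D_def cdiag_def mat_def)
    thus ?thesis using T(2) unfolding loewner_le_def psd_def
      by (metis Re_complex_of_real diff_ge_0_iff_ge one_complex.sel(1) minus_complex.sel(1))
  qed
  define r where "r i = Re ((adjoint U ** \<rho> ** U)$i$i)" for i
  define t where "t i = Re ((adjoint U ** \<sigma> ** U)$i$i)" for i
  have rt_nn: "r i \<ge> 0" "t i \<ge> 0" for i
    using dr ds unfolding r_def t_def conj_form_entry density_def psd_def by auto
  have tr1: "sum (\<lambda>i. Re ((adjoint U ** X ** U)$i$i)) UNIV = 1" if "density X" for X
  proof -
    have "trace (adjoint U ** X ** U) = trace (X ** (U ** adjoint U))"
      by (metis matrix_mul_assoc trace_mul_sym)
    also have "\<dots> = 1" using UU' that by (simp add: density_def)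
    finally show ?thesis by (simp add: trace_def Re_sum flip: Re_sum)
  qed
  have rs: "sum r UNIV = 1" "sum t UNIV = 1" using tr1[OF dr] tr1[OF ds] by (simp_all add: r_def t_def)
  obtain e where e01: "\<forall>i. e i = 0 \<or> e i = 1"
    and eF: "Fb \<alpha> (\<Sum>i\<in>UNIV. e i * r i) (\<Sum>i\<in>UNIV. e i * t i) \<le> Fb \<alpha> (\<Sum>i\<in>UNIV. d i * r i) (\<Sum>i\<in>UNIV. d i * t i)"
    using vertex[OF a rt_nn(1) rt_nn(2) rs, of d] d0 d1 by blast
  define Q where "Q = U ** cdiag (\<lambda>i. complex_of_real (e i)) ** adjoint U"
  have "is_proj Q"
  proof -
    have ee: "(\<lambda>i. complex_of_real (e i) * complex_of_real (e i)) = (\<lambda>i. complex_of_real (e i))"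
    proof
      fix i show "complex_of_real (e i) * complex_of_real (e i) = complex_of_real (e i)"
        using e01[rule_format, of i] by auto
    qed
    have "Q ** Q = U ** (cdiag (\<lambda>i. complex_of_real (e i)) ** (adjoint U ** U) ** cdiag (\<lambda>i. complex_of_real (e i))) ** adjoint U"
      unfolding Q_def by (simp add: matrix_mul_assoc)
    also have "\<dots> = Q" unfolding Q_def UU by (simp add: cdiag_mult ee)
    finally have "Q ** Q = Q" .
    moreover have "adjoint Q = Q" unfolding Q_def
      by (simp add: adjoint_mult adjoint_cdiag matrix_mul_assoc)
    ultimately show ?thesis by (simp add: is_proj_def)
  qed
  moreover have "Re (trace (\<rho> ** Q)) = (\<Sum>i\<in>UNIV. e i * r i)" "Re (trace (\<sigma> ** Q)) = (\<Sum>i\<in>UNIV. e i * t i)"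
    unfolding Q_def re_trace_spec r_def t_def by simp_all
  moreover have "Re (trace (\<rho> ** T)) = (\<Sum>i\<in>UNIV. d i * r i)" "Re (trace (\<sigma> ** T)) = (\<Sum>i\<in>UNIV. d i * t i)"
    unfolding Td re_trace_spec r_def t_def by simp_all
  ultimately show ?thesis using eF by metis
qed

lemma Dtest_le:
  fixes \<rho> \<sigma> P :: "complex^'n^'n"
  assumes dr: "density \<rho>" and ds: "density \<sigma>" and a: "0 < \<alpha>" "\<alpha> < 1"
    and max: "\<forall>Q. is_proj Q \<longrightarrow>
           renyi \<alpha> UNIV (test_map Q \<rho>) (test_map Q \<sigma>) \<le> renyi \<alpha> UNIV (test_map P \<rho>) (test_map P \<sigma>)"
  shows "D_test \<alpha> \<rho> \<sigma> \<le> renyi \<alpha> UNIV (test_map P \<rho>) (test_map P \<sigma>)"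
  unfolding D_test_def
proof (rule SUP_least)
  fix T :: "complex^'n^'n" assume "T \<in> {T. psd T \<and> loewner_le T (mat 1)}"
  then obtain Q where Q: "is_proj Q" and F: "Fb \<alpha> (Re (trace (\<rho> ** Q))) (Re (trace (\<sigma> ** Q)))
                 \<le> Fb \<alpha> (Re (trace (\<rho> ** T))) (Re (trace (\<sigma> ** T)))"
    using test_to_proj[OF dr ds _ _ a] by blast
  have "renyi \<alpha> UNIV (test_map T \<rho>) (test_map T \<sigma>) \<le> renyi \<alpha> UNIV (test_map Q \<rho>) (test_map Q \<sigma>)"
    unfolding renyi_test[OF dr ds] by (rule rv_mono[OF a(2) _ F]) (simp add: Fb_def gm_nonneg add_nonneg_nonneg)
  also have "\<dots> \<le> renyi \<alpha> UNIV (test_map P \<rho>) (test_map P \<sigma>)" using max Q by blast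
  finally show "renyi \<alpha> UNIV (test_map T \<rho>) (test_map T \<sigma>) \<le> renyi \<alpha> UNIV (test_map P \<rho>) (test_map P \<sigma>)" .
qed



definition outer :: "complex^'n \<Rightarrow> complex^'n \<Rightarrow> complex^'n^'n" where
  "outer x y = (\<chi> i j. x$i * cnj (y$j))"

lemma outer_mv: "outer x y *v z = cinner y z *s x"
  by (simp add: outer_def vec_eq_iff matrix_vector_mult_def cinner_def sum_distrib_left algebra_simps)

lemma outer_proj: assumes "cinner x x = 1" shows "is_proj (outer x x)"
proof -
  have "outer x x ** outer x x = outer x x"
    by (rule mat_eq_mv) (simp add: outer_mv cinner_scale_right assms flip: matrix_vector_mul_assoc)
  moreover have "adjoint (outer x x) = outer x x" by (simp add: outer_def adjoint_def vec_eq_iff)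
  ultimately show ?thesis by (simp add: is_proj_def)
qed

lemma trace_outer: "trace (outer x x ** M) = qform M x"
proof -
  have "trace (outer x x ** M) = (\<Sum>i\<in>UNIV. \<Sum>k\<in>UNIV. x$i * cnj (x$k) * M$k$i)"
    by (simp add: trace_def matrix_matrix_mult_def outer_def)
  also have "\<dots> = (\<Sum>k\<in>UNIV. \<Sum>i\<in>UNIV. x$i * cnj (x$k) * M$k$i)" by (rule sum.swap)
  also have "\<dots> = qform M x"
    by (simp add: qform_def matrix_vector_mult_def sum_distrib_left algebra_simps)
  finally show ?thesis .
qed

lemma qform_mscale: "qform (mscale c M) y = c * qform M y"
  by (simp add: qform_def mscale_def matrix_vector_mult_def sum_distrib_left algebra_simps)

lemma qform_sandwich: "is_proj P \<Longrightarrow> qform (P ** M ** P) y = qform M (P *v y)"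
  by (simp add: qform_cinner cinner_herm proj_herm flip: matrix_vector_mul_assoc)

lemma normalize_vec:
  assumes "v \<noteq> 0"
  obtains c where "c \<noteq> 0" "cinner (c *s v) (c *s v) = 1" "\<And>M. qform M (c *s v) = complex_of_real ((1 / norm v)^2) * qform M v"
proof -
  define c where "c = complex_of_real (1 / norm v)"
  have "c \<noteq> 0" using assms by (simp add: c_def)
  moreover have "cinner (c *s v) (c *s v) = 1"
    using assms unfolding c_def cinner_scale_left cinner_scale_right by (simp add: cinner_self power2_eq_square)
  moreover have "qform M (c *s v) = complex_of_real ((1 / norm v)^2) * qform M v" for M
    by (simp add: qform_scale c_def power2_eq_square)
  ultimately show ?thesis using that by blast
qed

lemma psd_qform_real: "psd A \<Longrightarrow> qform A x = complex_of_real (Re (qform A x)) \<and> Re (qform A x) \<ge> 0"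
  by (simp add: psd_def complex_eq_iff)

lemma partA:
  fixes \<rho> \<sigma> P :: "complex^'n^'n"
  assumes dr: "density \<rho>" and ds: "density \<sigma>" and a: "0 < \<alpha>" "\<alpha> < 1" and P: "is_proj P"
    and meas: "D_meas \<alpha> \<rho> \<sigma> \<le> renyi \<alpha> UNIV (test_map P \<rho>) (test_map P \<sigma>)"
  shows "mscale (trace (\<sigma> ** P)) (P ** \<rho> ** P) = mscale (trace (\<rho> ** P)) (P ** \<sigma> ** P)"
proof (rule ccontr)
  assume ne: "\<not> ?thesis"
  have pr: "psd \<rho>" "trace \<rho> = 1" and ps: "psd \<sigma>" "trace \<sigma> = 1" using dr ds by (auto simp: density_def)
  define A where "A = Re (trace (\<rho> ** P))"
  define B where "B = Re (trace (\<sigma> ** P))"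
  have trA: "trace (\<rho> ** P) = complex_of_real A" and trB: "trace (\<sigma> ** P) = complex_of_real B"
    using trace_proj_psd(1)[OF P pr(1)] trace_proj_psd(1)[OF P ps(1)] by (simp_all add: A_def B_def)
  define X where "X = mscale (trace (\<sigma> ** P)) (P ** \<rho> ** P) - mscale (trace (\<rho> ** P)) (P ** \<sigma> ** P)"
  have "X \<noteq> 0" using ne by (simp add: X_def)
  then obtain y where y: "qform X y \<noteq> 0" using polarization by blast
  define v where "v = P *v y"
  have qX: "qform X y = complex_of_real B * qform \<rho> v - complex_of_real A * qform \<sigma> v"
    by (simp add: X_def qform_mdiff qform_mscale qform_sandwich[OF P] trA trB v_def)
  have "v \<noteq> 0" using y qX by (auto simp: qform_def)
  then obtain c where c: "c \<noteq> 0" "cinner (c *s v) (c *s v) = 1"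
      "\<And>M. qform M (c *s v) = complex_of_real ((1 / norm v)^2) * qform M v"
    using normalize_vec by blast
  define x where "x = c *s v"
  have x1: "cinner x x = 1" using c by (simp add: x_def)
  have Px: "P *v x = x" by (simp add: x_def v_def mv_scale proj_idem_mv[OF P])
  define a1 where "a1 = Re (qform \<rho> x)"
  define b1 where "b1 = Re (qform \<sigma> x)"
  have qa: "qform \<rho> x = complex_of_real a1" "a1 \<ge> 0" using psd_qform_real[OF pr(1)] by (auto simp: a1_def)
  have qb: "qform \<sigma> x = complex_of_real b1" "b1 \<ge> 0" using psd_qform_real[OF ps(1)] by (auto simp: b1_def)
  have "complex_of_real B * qform \<rho> x - complex_of_real A * qform \<sigma> x =
        complex_of_real ((1 / norm v)^2) * qform X y"
    by (simp add: qX x_def c(3) algebra_simps)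
  also have "\<dots> \<noteq> 0" using y \<open>v \<noteq> 0\<close> by simp
  finally have cond: "a1 * B \<noteq> b1 * A" using qa qb
    by (metis (no_types, opaque_lifting) mult.commute of_real_mult right_minus_eq)
  define Q where "Q = outer x x"
  have Qp: "is_proj Q" using outer_proj[OF x1] by (simp add: Q_def)
  have PQ: "P ** Q = Q"
    by (rule mat_eq_mv) (simp add: Q_def outer_mv mv_scale Px flip: matrix_vector_mul_assoc)
  have QP: "Q ** P = Q"
    by (rule mat_eq_mv) (simp add: Q_def outer_mv cinner_herm[OF proj_herm[OF P]] Px flip: matrix_vector_mul_assoc)
  have PQp: "is_proj (P - Q)"
  proof -
    have "(P - Q) ** (P - Q) = P - Q"
      using P Qp PQ QP by (simp add: mm_diff_left mm_diff_right is_proj_def)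
    moreover have "adjoint (P - Q) = P - Q" using P Qp by (simp add: adjoint_diff is_proj_def)
    ultimately show ?thesis by (simp add: is_proj_def)
  qed
  define M :: "nat \<Rightarrow> complex^'n^'n" where "M i = (if i = 0 then Q else if i = 1 then P - Q else mat 1 - P)" for i
  have povm: "povm 3 M"
  proof -
    have "\<forall>i<3. psd (M i)" using Qp PQp proj_compl[OF P] by (auto simp: M_def proj_psd)
    moreover have "(\<Sum>i<3. M i) = mat 1" by (simp add: M_def numeral_3_eq_3)
    ultimately show ?thesis by (simp add: povm_def)
  qed
  have tr: "Re (trace (M 0 ** X)) = Re (qform X x)"
           "Re (trace (M 1 ** X)) = Re (trace (X ** P)) - Re (qform X x)"
           "Re (trace (M 2 ** X)) = Re (trace X) - Re (trace (X ** P))" for X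
    by (simp_all add: M_def Q_def trace_outer mm_diff_right trace_sub trace_mul_sym[of P X])
  have a2: "Re (trace ((P - Q) ** \<rho>)) \<ge> 0" "Re (trace ((P - Q) ** \<sigma>)) \<ge> 0"
    using trace_proj_psd[OF PQp pr(1)] trace_proj_psd[OF PQp ps(1)] by simp_all
  hence a2': "A - a1 \<ge> 0" "B - b1 \<ge> 0"
    using tr(2)[of \<rho>] tr(2)[of \<sigma>] by (simp_all add: M_def A_def B_def a1_def b1_def)
  have s3: "renyi \<alpha> {..<3} (\<lambda>i. Re (trace (M i ** \<rho>))) (\<lambda>i. Re (trace (M i ** \<sigma>))) =
        rv \<alpha> (gm \<alpha> a1 b1 + gm \<alpha> (A - a1) (B - b1) + gm \<alpha> (1 - A) (1 - B))"
  proof -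
    have u3: "{..<3::nat} = {0,1,2}" by auto
    show ?thesis using tr[of \<rho>] tr[of \<sigma>] pr(2) ps(2)
      by (simp add: renyi_rv u3 A_def B_def a1_def b1_def add.assoc)
  qed
  have sP: "renyi \<alpha> UNIV (test_map P \<rho>) (test_map P \<sigma>) = rv \<alpha> (gm \<alpha> A B + gm \<alpha> (1 - A) (1 - B))"
    by (simp add: renyi_test[OF dr ds] Fb_def A_def B_def)
  have strict: "gm \<alpha> a1 b1 + gm \<alpha> (A - a1) (B - b1) < gm \<alpha> A B"
    using gm_supadd_gen(2)[OF a qa(2) a2'(1) qb(2) a2'(2)] cond by (simp add: mult.commute)
  have "renyi \<alpha> UNIV (test_map P \<rho>) (test_map P \<sigma>) < renyi \<alpha> {..<3} (\<lambda>i. Re (trace (M i ** \<rho>))) (\<lambda>i. Re (trace (M i ** \<sigma>)))"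
    unfolding sP s3 by (rule rv_strict[OF a(2)]) (use strict gm_nonneg in \<open>auto intro: add_nonneg_nonneg\<close>)
  also have "\<dots> \<le> D_meas \<alpha> \<rho> \<sigma>"
    unfolding D_meas_def using povm by (intro SUP_upper2[of "(3, M)"]) auto
  finally show False using meas by simp
qed



lemma proj_of_diag:
  assumes UU: "adjoint U ** U = mat 1" and e01: "\<forall>i. e i = 0 \<or> e i = 1"
  shows "is_proj (U ** cdiag (\<lambda>i. complex_of_real (e i)) ** adjoint U)"
proof -
  define Q where "Q = U ** cdiag (\<lambda>i. complex_of_real (e i)) ** adjoint U"
  have ee: "(\<lambda>i. complex_of_real (e i) * complex_of_real (e i)) = (\<lambda>i. complex_of_real (e i))"
  proof
    fix i show "complex_of_real (e i) * complex_of_real (e i) = complex_of_real (e i)"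
      using e01[rule_format, of i] by auto
  qed
  have "Q ** Q = U ** (cdiag (\<lambda>i. complex_of_real (e i)) ** (adjoint U ** U) ** cdiag (\<lambda>i. complex_of_real (e i))) ** adjoint U"
    unfolding Q_def by (simp add: matrix_mul_assoc)
  also have "\<dots> = Q" unfolding Q_def UU by (simp add: cdiag_mult ee)
  finally have "Q ** Q = Q" .
  moreover have "adjoint Q = Q" unfolding Q_def
    by (simp add: adjoint_mult adjoint_cdiag matrix_mul_assoc)
  ultimately show ?thesis by (simp add: is_proj_def Q_def)
qed

lemma proj_range_unique:
  assumes P1: "is_proj P1" and P2: "is_proj P2" and r: "range (\<lambda>x. P1 *v x) = range (\<lambda>x. P2 *v x)"
  shows "P1 = P2"
proof -
  have fix_lem: "Pb ** Pa = Pa" if h1: "is_proj Pa" and h2: "is_proj Pb" and h3: "range (\<lambda>x. Pa *v x) \<subseteq> range (\<lambda>x. Pb *v x)" for Pa Pb :: "complex^'n^'n"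
  proof (rule mat_eq_mv)
    fix v
    obtain w where "Pa *v v = Pb *v w" using h3 by blast
    thus "(Pb ** Pa) *v v = Pa *v v"
      by (simp add: proj_idem_mv[OF h2] flip: matrix_vector_mul_assoc)
  qed
  have a: "P2 ** P1 = P1" using fix_lem[OF P1 P2] r by simp
  have b: "P1 ** P2 = P2" using fix_lem[OF P2 P1] r by simp
  have "P1 = adjoint (P2 ** P1)" using a P1 by (simp add: is_proj_def)
  also have "\<dots> = P1 ** P2" using P1 P2 by (simp add: adjoint_mult is_proj_def)
  finally show ?thesis using b by simp
qed

lemma supp_exists:
  fixes A :: "complex^'n^'n"
  assumes herm: "adjoint A = A"
  shows "\<exists>S. is_proj S \<and> range (\<lambda>x. S *v x) = range (\<lambda>x. A *v x)"
proof -
  obtain U d where UU: "adjoint U ** U = mat 1" and UU': "U ** adjoint U = mat 1"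
    and Ad: "A = U ** cdiag (\<lambda>i. complex_of_real (d i)) ** adjoint U"
    using spectral[OF herm] by blast
  define e where "e i = (if d i = 0 then 0 else 1::real)" for i
  define di where "di i = (if d i = 0 then 0 else 1 / d i)" for i
  define S where "S = U ** cdiag (\<lambda>i. complex_of_real (e i)) ** adjoint U"
  define W where "W = U ** cdiag (\<lambda>i. complex_of_real (di i)) ** adjoint U"
  have Sp: "is_proj S" unfolding S_def by (rule proj_of_diag[OF UU]) (simp add: e_def)
  have mulU: "(U ** cdiag a ** adjoint U) ** (U ** cdiag b ** adjoint U) = U ** cdiag (\<lambda>i. a i * b i) ** adjoint U"
    for a b
  proof -
    have "(U ** cdiag a ** adjoint U) ** (U ** cdiag b ** adjoint U) = U ** (cdiag a ** (adjoint U ** U) ** cdiag b) ** adjoint U"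
      by (simp add: matrix_mul_assoc)
    thus ?thesis by (simp add: UU cdiag_mult)
  qed
  have SA: "S ** A = A"
  proof -
    have "(\<lambda>i. complex_of_real (e i) * complex_of_real (d i)) = (\<lambda>i. complex_of_real (d i))"
      by (auto simp: e_def)
    thus ?thesis unfolding S_def Ad mulU by simp
  qed
  have AW: "A ** W = S"
  proof -
    have "(\<lambda>i. complex_of_real (d i) * complex_of_real (di i)) = (\<lambda>i. complex_of_real (e i))"
      by (auto simp: e_def di_def)
    thus ?thesis unfolding W_def Ad S_def mulU by simp
  qed
  have "range (\<lambda>x. S *v x) = range (\<lambda>x. A *v x)"
  proof
    show "range (\<lambda>x. S *v x) \<subseteq> range (\<lambda>x. A *v x)"
    proof
      fix y assume "y \<in> range (\<lambda>x. S *v x)"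
      then obtain x where "y = S *v x" by blast
      hence "y = A *v (W *v x)" using AW by (simp add: matrix_vector_mul_assoc)
      thus "y \<in> range (\<lambda>x. A *v x)" by blast
    qed
    show "range (\<lambda>x. A *v x) \<subseteq> range (\<lambda>x. S *v x)"
    proof
      fix y assume "y \<in> range (\<lambda>x. A *v x)"
      then obtain x where "y = A *v x" by blast
      hence "y = S *v (A *v x)" using SA by (simp add: matrix_vector_mul_assoc)
      thus "y \<in> range (\<lambda>x. S *v x)" by blast
    qed
  qed
  with Sp show ?thesis by blast
qed

lemma supp_props:
  assumes "adjoint A = A"
  shows "is_proj (supp_proj A) \<and> range (\<lambda>x. supp_proj A *v x) = range (\<lambda>x. A *v x)"
proof -
  obtain S where S: "is_proj S \<and> range (\<lambda>x. S *v x) = range (\<lambda>x. A *v x)"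
    using supp_exists[OF assms] by blast
  have "\<exists>!P. is_proj P \<and> range (\<lambda>x. P *v x) = range (\<lambda>x. A *v x)"
  proof (rule ex1I[of _ S])
    show "is_proj S \<and> range (\<lambda>x. S *v x) = range (\<lambda>x. A *v x)" by (rule S)
    fix P assume "is_proj P \<and> range (\<lambda>x. P *v x) = range (\<lambda>x. A *v x)"
    thus "P = S" using S proj_range_unique by metis
  qed
  thus ?thesis unfolding supp_proj_def by (rule theI')
qed

lemma kernel_via_range:
  assumes hA: "adjoint A = A" and hS: "adjoint S = S" and r: "range (\<lambda>x. S *v x) = range (\<lambda>x. A *v x)"
    and w: "A *v w = 0"
  shows "S *v w = 0"
proof -
  have "cinner u (S *v w) = cinner u 0" for u
  proof -
    have "S *v u \<in> range (\<lambda>x. A *v x)" using r by blast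
    then obtain z where z: "S *v u = A *v z" by blast
    have "cinner u (S *v w) = cinner (S *v u) w" by (rule cinner_herm[OF hS])
    also have "\<dots> = cinner z (A *v w)" by (simp add: z cinner_herm[OF hA])
    finally show ?thesis using w by simp
  qed
  thus ?thesis using cinner_ext by blast
qed

lemma supp_kernel:
  assumes pA: "psd A" and pB: "psd B" and le: "loewner_le (supp_proj A) (supp_proj B)"
    and w: "B *v w = 0"
  shows "A *v w = 0"
proof -
  have hA: "adjoint A = A" and hB: "adjoint B = B" using pA pB by (auto simp: psd_def)
  note SA = supp_props[OF hA] and SB = supp_props[OF hB]
  have "supp_proj B *v w = 0"
    using kernel_via_range[OF hB proj_herm _ w] SB by blast
  hence q0: "qform (supp_proj B) w = 0" by (simp add: qform_cinner)
  have "Re (qform (supp_proj B - supp_proj A) w) \<ge> 0" using le by (simp add: loewner_le_def psd_def)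
  hence "Re (qform (supp_proj A) w) \<le> 0" by (simp add: qform_mdiff q0)
  moreover have "qform (supp_proj A) w = complex_of_real ((norm (supp_proj A *v w))^2)"
    using SA by (simp add: proj_qform cinner_self)
  ultimately have "norm (supp_proj A *v w) = 0" by simp
  hence SAw: "supp_proj A *v w = 0" by simp
  have r: "range (\<lambda>x. A *v x) = range (\<lambda>x. supp_proj A *v x)" using SA by simp
  show ?thesis using kernel_via_range[OF proj_herm hA r SAw] SA by blast
qed

lemma supp_zero:
  fixes A B P :: "complex^'n^'n"
  assumes pA: "psd A" and pB: "psd B" and le: "loewner_le (supp_proj A) (supp_proj B)"
    and P: "is_proj P" and z: "P ** B ** P = 0"
  shows "P ** A ** P = 0"
proof (rule mat_eq_mv)
  fix v
  have "qform B (P *v v) = 0" using qform_sandwich[OF P, of B v] z by (simp add: qform_def)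
  hence "B *v (P *v v) = 0" by (rule psd_null[OF pB])
  hence "A *v (P *v v) = 0" by (rule supp_kernel[OF pA pB le])
  thus "(P ** A ** P) *v v = 0 *v v" by (simp flip: matrix_vector_mul_assoc)
qed

lemma partB:
  fixes \<rho> \<sigma> P :: "complex^'n^'n"
  assumes dr: "density \<rho>" and ds: "density \<sigma>" and a: "0 < \<alpha>" "\<alpha> < 1" and P: "is_proj P"
    and ne: "\<rho> \<noteq> \<sigma>" and z1: "P ** \<rho> ** P = 0" and z2: "P ** \<sigma> ** P = 0"
    and max: "\<forall>Q. is_proj Q \<longrightarrow>
           renyi \<alpha> UNIV (test_map Q \<rho>) (test_map Q \<sigma>) \<le> renyi \<alpha> UNIV (test_map P \<rho>) (test_map P \<sigma>)"
  shows False
proof -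
  have pr: "psd \<rho>" "trace \<rho> = 1" and ps: "psd \<sigma>" "trace \<sigma> = 1" using dr ds by (auto simp: density_def)
  have t0: "trace (\<rho> ** P) = 0" "trace (\<sigma> ** P) = 0"
    using trace_proj_right[OF P, of \<rho>] trace_proj_right[OF P, of \<sigma>] z1 z2 proj_herm[OF P]
    by (simp_all add: trace_0[unfolded mat_0])
  have gm11: "gm \<alpha> 1 1 = 1" by (simp add: gm_def)
  have sP: "renyi \<alpha> UNIV (test_map P \<rho>) (test_map P \<sigma>) = rv \<alpha> 1"
    by (simp add: renyi_test[OF dr ds] Fb_def t0 gm11)
  have "\<rho> - \<sigma> \<noteq> 0" using ne by simp
  then obtain y where y: "qform (\<rho> - \<sigma>) y \<noteq> 0" using polarization by blast
  hence "y \<noteq> 0" by (auto simp: qform_def)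
  then obtain c where c: "c \<noteq> 0" "cinner (c *s y) (c *s y) = 1"
      "\<And>M. qform M (c *s y) = complex_of_real ((1 / norm y)^2) * qform M y"
    using normalize_vec by blast
  define x where "x = c *s y"
  have x1: "cinner x x = 1" using c by (simp add: x_def)
  have "qform (\<rho> - \<sigma>) x \<noteq> 0" using y \<open>y \<noteq> 0\<close> by (simp add: x_def c(3))
  hence qne: "qform \<rho> x \<noteq> qform \<sigma> x" by (simp add: qform_mdiff)
  define Q where "Q = outer x x"
  have Qp: "is_proj Q" using outer_proj[OF x1] by (simp add: Q_def)
  define a1 where "a1 = Re (qform \<rho> x)"
  define b1 where "b1 = Re (qform \<sigma> x)"
  have qa: "qform \<rho> x = complex_of_real a1" "a1 \<ge> 0" using psd_qform_real[OF pr(1)] by (auto simp: a1_def)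
  have qb: "qform \<sigma> x = complex_of_real b1" "b1 \<ge> 0" using psd_qform_real[OF ps(1)] by (auto simp: b1_def)
  have ab: "a1 \<noteq> b1" using qne qa qb by auto
  have trQ: "Re (trace (X ** Q)) = Re (qform X x)" for X
    by (simp add: Q_def trace_mul_sym[of X] trace_outer)
  have le1: "1 - a1 \<ge> 0" "1 - b1 \<ge> 0"
  proof -
    have "Re (trace (\<rho> ** (mat 1 - Q))) \<ge> 0" "Re (trace (\<sigma> ** (mat 1 - Q))) \<ge> 0"
      using trace_proj_psd(2)[OF proj_compl[OF Qp] pr(1)] trace_proj_psd(2)[OF proj_compl[OF Qp] ps(1)] by auto
    thus "1 - a1 \<ge> 0" "1 - b1 \<ge> 0" using pr(2) ps(2) trQ[of \<rho>] trQ[of \<sigma>]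
      by (simp_all add: trace_compl a1_def b1_def)
  qed
  have sQ: "renyi \<alpha> UNIV (test_map Q \<rho>) (test_map Q \<sigma>) = rv \<alpha> (gm \<alpha> a1 b1 + gm \<alpha> (1 - a1) (1 - b1))"
    by (simp add: renyi_test[OF dr ds] Fb_def trQ a1_def b1_def)
  have "gm \<alpha> a1 b1 + gm \<alpha> (1 - a1) (1 - b1) < gm \<alpha> (a1 + (1 - a1)) (b1 + (1 - b1))"
    using gm_supadd_gen(2)[OF a qa(2) le1(1) qb(2) le1(2)] ab by simp
  hence "gm \<alpha> a1 b1 + gm \<alpha> (1 - a1) (1 - b1) < 1" using gm11 by simp
  hence "rv \<alpha> 1 < rv \<alpha> (gm \<alpha> a1 b1 + gm \<alpha> (1 - a1) (1 - b1))"
    by (intro rv_strict[OF a(2)]) (auto intro: add_nonneg_nonneg gm_nonneg)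
  moreover have "renyi \<alpha> UNIV (test_map Q \<rho>) (test_map Q \<sigma>) \<le> renyi \<alpha> UNIV (test_map P \<rho>) (test_map P \<sigma>)"
    using max Qp by blast
  ultimately show False using sP sQ by simp
qed



lemma renyi_compl:
  fixes \<rho> \<sigma> P :: "complex^'n^'n"
  assumes dr: "density \<rho>" and ds: "density \<sigma>"
  shows "renyi \<alpha> UNIV (test_map (mat 1 - P) \<rho>) (test_map (mat 1 - P) \<sigma>) = renyi \<alpha> UNIV (test_map P \<rho>) (test_map P \<sigma>)"
  using dr ds by (simp add: renyi_test[OF dr ds] Fb_def trace_compl density_def add.commute)

theorem mainTheorem18:
  fixes \<rho> \<sigma> P :: "complex^'n^'n" and \<alpha> :: real
  assumes "density \<rho>" and "density \<sigma>" and "0 < \<alpha>" and "\<alpha> < 1"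
    and "D_test \<alpha> \<rho> \<sigma> = D_meas \<alpha> \<rho> \<sigma>"
    and "is_proj P"
    and "\<forall>Q. is_proj Q \<longrightarrow>
           renyi \<alpha> UNIV (test_map Q \<rho>) (test_map Q \<sigma>) \<le> renyi \<alpha> UNIV (test_map P \<rho>) (test_map P \<sigma>)"
  shows "mscale (trace (\<sigma> ** P)) (P ** \<rho> ** P) = mscale (trace (\<rho> ** P)) (P ** \<sigma> ** P)
       \<and> mscale (trace (\<sigma> ** (mat 1 - P))) ((mat 1 - P) ** \<rho> ** (mat 1 - P))
           = mscale (trace (\<rho> ** (mat 1 - P))) ((mat 1 - P) ** \<sigma> ** (mat 1 - P))
       \<and> (\<rho> \<noteq> \<sigma> \<longrightarrow>
           (loewner_le (supp_proj \<rho>) (supp_proj \<sigma>) \<longrightarrow>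
              P ** \<sigma> ** P \<noteq> 0 \<and> (mat 1 - P) ** \<sigma> ** (mat 1 - P) \<noteq> 0)
         \<and> (loewner_le (supp_proj \<sigma>) (supp_proj \<rho>) \<longrightarrow>
              P ** \<rho> ** P \<noteq> 0 \<and> (mat 1 - P) ** \<rho> ** (mat 1 - P) \<noteq> 0))"
proof -
  note dr = assms(1) and ds = assms(2) and a = assms(3,4) and P = assms(6) and max = assms(7)
  have pr: "psd \<rho>" and ps: "psd \<sigma>" using dr ds by (auto simp: density_def)
  have P': "is_proj (mat 1 - P)" by (rule proj_compl[OF P])
  have eqR: "renyi \<alpha> UNIV (test_map (mat 1 - P) \<rho>) (test_map (mat 1 - P) \<sigma>) = renyi \<alpha> UNIV (test_map P \<rho>) (test_map P \<sigma>)"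
    by (rule renyi_compl[OF dr ds])
  have max': "\<forall>Q. is_proj Q \<longrightarrow>
           renyi \<alpha> UNIV (test_map Q \<rho>) (test_map Q \<sigma>) \<le> renyi \<alpha> UNIV (test_map (mat 1 - P) \<rho>) (test_map (mat 1 - P) \<sigma>)"
    using max eqR by simp
  have meas: "D_meas \<alpha> \<rho> \<sigma> \<le> renyi \<alpha> UNIV (test_map P \<rho>) (test_map P \<sigma>)"
    using Dtest_le[OF dr ds a max] assms(5) by simp
  have meas': "D_meas \<alpha> \<rho> \<sigma> \<le> renyi \<alpha> UNIV (test_map (mat 1 - P) \<rho>) (test_map (mat 1 - P) \<sigma>)"
    using meas eqR by simp
  have c1: "mscale (trace (\<sigma> ** P)) (P ** \<rho> ** P) = mscale (trace (\<rho> ** P)) (P ** \<sigma> ** P)"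
    by (rule partA[OF dr ds a P meas])
  have c2: "mscale (trace (\<sigma> ** (mat 1 - P))) ((mat 1 - P) ** \<rho> ** (mat 1 - P))
           = mscale (trace (\<rho> ** (mat 1 - P))) ((mat 1 - P) ** \<sigma> ** (mat 1 - P))"
    by (rule partA[OF dr ds a P' meas'])
  have c3: "(loewner_le (supp_proj \<rho>) (supp_proj \<sigma>) \<longrightarrow>
              P ** \<sigma> ** P \<noteq> 0 \<and> (mat 1 - P) ** \<sigma> ** (mat 1 - P) \<noteq> 0)
         \<and> (loewner_le (supp_proj \<sigma>) (supp_proj \<rho>) \<longrightarrow>
              P ** \<rho> ** P \<noteq> 0 \<and> (mat 1 - P) ** \<rho> ** (mat 1 - P) \<noteq> 0)" if ne: "\<rho> \<noteq> \<sigma>"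
  proof (intro conjI impI)
    assume le: "loewner_le (supp_proj \<rho>) (supp_proj \<sigma>)"
    show "P ** \<sigma> ** P \<noteq> 0"
    proof
      assume z: "P ** \<sigma> ** P = 0"
      have "P ** \<rho> ** P = 0" by (rule supp_zero[OF pr ps le P z])
      thus False using partB[OF dr ds a P ne _ z max] by blast
    qed
    show "(mat 1 - P) ** \<sigma> ** (mat 1 - P) \<noteq> 0"
    proof
      assume z: "(mat 1 - P) ** \<sigma> ** (mat 1 - P) = 0"
      have "(mat 1 - P) ** \<rho> ** (mat 1 - P) = 0" by (rule supp_zero[OF pr ps le P' z])
      thus False using partB[OF dr ds a P' ne _ z max'] by blast
    qed
  next
    assume le: "loewner_le (supp_proj \<sigma>) (supp_proj \<rho>)"
    show "P ** \<rho> ** P \<noteq> 0"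
    proof
      assume z: "P ** \<rho> ** P = 0"
      have "P ** \<sigma> ** P = 0" by (rule supp_zero[OF ps pr le P z])
      thus False using partB[OF dr ds a P ne z _ max] by blast
    qed
    show "(mat 1 - P) ** \<rho> ** (mat 1 - P) \<noteq> 0"
    proof
      assume z: "(mat 1 - P) ** \<rho> ** (mat 1 - P) = 0"
      have "(mat 1 - P) ** \<sigma> ** (mat 1 - P) = 0" by (rule supp_zero[OF ps pr le P' z])
      thus False using partB[OF dr ds a P' ne z _ max'] by blast
    qed
  qed
  show ?thesis using c1 c2 c3 by blast
qed

end
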